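(* Let $\alpha>0$, $A\ge0$, $B>0$, $t>0$, and let $P_n(x,t)=x^n+\mathsf{p}_1(n,t)x^{n-1}+\cdots$ be the monic polynomials orthogonal on $[0,\infty)$ w.r.t. $w(x,t)=x^\alpha e^{-x}(A+B\theta(x-t))$, with norms $h_n(t)$. Let $r_n(t)=Bt^\alpha e^{-t}P_n(t,t)P_{n-1}(t,t)/h_{n-1}(t)$. Then for $n\ge1$ $$\frac{d}{dt}\mathsf{p}_1(n,t)=r_n(t).$$
   Context: $\theta$ is the Heaviside function ($1$ for $x>0$, $0$ otherwise); $P_n(t,t)$ is $P_n(x,t)$ at $x=t$. *)

theory Defs
  imports "HOL-Analysis.Analysis" "HOL-Computational_Algebra.Polynomial"
begin

definition heaviside :: "real \<Rightarrow> real" where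
  "heaviside x = (if x > 0 then 1 else 0)"

definition wgt :: "real \<Rightarrow> real \<Rightarrow> real \<Rightarrow> real \<Rightarrow> real \<Rightarrow> real" where
  "wgt \<alpha> A B t x = x powr \<alpha> * exp (- x) * (A + B * heaviside (x - t))"

definition monic_OPS :: "real \<Rightarrow> real \<Rightarrow> real \<Rightarrow> real \<Rightarrow> (nat \<Rightarrow> real poly) \<Rightarrow> bool" where
  "monic_OPS \<alpha> A B t Q \<longleftrightarrow>
     (\<forall>n. degree (Q n) = n \<and> lead_coeff (Q n) = 1) \<and>
     (\<forall>n m. m \<noteq> n \<longrightarrow>
        integral {0..} (\<lambda>x. poly (Q n) x * poly (Q m) x * wgt \<alpha> A B t x) = 0)"

definition hnorm :: "real \<Rightarrow> real \<Rightarrow> real \<Rightarrow> real \<Rightarrow> real poly \<Rightarrow> real" where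
  "hnorm \<alpha> A B t q = integral {0..} (\<lambda>x. (poly q x)\<^sup>2 * wgt \<alpha> A B t x)"

end

theory Submission
  imports Defs
begin

lemma expand:
  fixes Q :: "nat \<Rightarrow> real poly"
  assumes dQ: "\<And>k. degree (Q k) = k" and lQ: "\<And>k. lead_coeff (Q k) = 1"
  shows "(\<forall>i\<ge>m. coeff q i = 0) \<Longrightarrow> \<exists>a. q = (\<Sum>k<m. smult (a k) (Q k))"
proof (induction m arbitrary: q)
  case 0
  then have "q = 0" by (simp add: poly_eq_iff)
  then show ?case by simp
next
  case (Suc m)
  define q' where "q' = q - smult (coeff q m) (Q m)"
  have cm: "coeff (Q m) m = 1" using lQ[of m] dQ[of m] by simp
  have "\<forall>i\<ge>m. coeff q' i = 0"
  proof (intro allI impI)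
    fix i assume i: "m \<le> i"
    show "coeff q' i = 0"
    proof (cases "i = m")
      case True then show ?thesis by (simp add: q'_def cm)
    next
      case False
      then have "m < i" using i by simp
      then have "coeff (Q m) i = 0" by (intro coeff_eq_0) (simp add: dQ)
      moreover have "coeff q i = 0" using Suc.prems \<open>m < i\<close> by simp
      ultimately show ?thesis by (simp add: q'_def)
    qed
  qed
  then obtain a where a: "q' = (\<Sum>k<m. smult (a k) (Q k))" using Suc.IH by blast
  define a' where "a' = a(m := coeff q m)"
  have "q = q' + smult (coeff q m) (Q m)" by (simp add: q'_def)
  also have "\<dots> = (\<Sum>k<m. smult (a' k) (Q k)) + smult (a' m) (Q m)"
    unfolding a by (simp add: a'_def)
  also have "\<dots> = (\<Sum>k<Suc m. smult (a' k) (Q k))" by simp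
  finally show ?case by blast
qed

lemma cont_bound:
  fixes f :: "real \<Rightarrow> real"
  assumes "continuous_on {a..b} f"
  shows "\<exists>C>0. \<forall>x\<in>{a..b}. \<bar>f x\<bar> \<le> C"
  using compact_imp_bounded[OF compact_continuous_image[OF assms compact_Icc]]
  unfolding bounded_pos by auto

locale opsl =
  fixes \<alpha> A B :: real and P :: "nat \<Rightarrow> real \<Rightarrow> real poly"
  assumes \<alpha>pos: "\<alpha> > 0" and Anonneg: "A \<ge> 0" and Bpos: "B > 0"
    and OPS: "\<And>s. s > 0 \<Longrightarrow> monic_OPS \<alpha> A B s (\<lambda>k. P k s)"
begin

definition w0 :: "real \<Rightarrow> real" where "w0 x = x powr \<alpha> * exp (- x)"

definition gp :: "real poly \<Rightarrow> real \<Rightarrow> real" where "gp p x = poly p x * w0 x"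

definition L :: "real poly \<Rightarrow> real" where "L p = integral {0..} (gp p)"
definition R :: "real poly \<Rightarrow> real \<Rightarrow> real" where "R p s = integral {0..s} (gp p)"
definition M :: "real \<Rightarrow> real poly \<Rightarrow> real" where "M s p = (A + B) * L p - B * R p s"

lemma int_mono: "(\<lambda>x. x ^ i * w0 x) integrable_on {0..}"
proof -
  have "((\<lambda>t. t powr ((\<alpha> + real i + 1) - 1) / exp t) has_integral Gamma (\<alpha> + real i + 1)) {0..}"
    by (rule Gamma_integral_real) (use \<alpha>pos in simp)
  then have "(\<lambda>t. t powr ((\<alpha> + real i + 1) - 1) / exp t) integrable_on {0..}" by blast
  then show ?thesis
  proof (rule integrable_eq)
    fix x :: real assume "x \<in> {0..}"
    then have x: "x \<ge> 0" by simp
    show "x powr (\<alpha> + real i + 1 - 1) / exp x = x ^ i * w0 x"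
    proof (cases "x = 0")
      case True then show ?thesis using \<alpha>pos by (simp add: w0_def)
    next
      case False
      then have "x > 0" using x by simp
      then show ?thesis
        by (simp add: w0_def powr_add powr_realpow exp_minus field_simps)
    qed
  qed
qed

lemma int_mono_c: "(\<lambda>x. c * (x ^ i * w0 x)) integrable_on {0..}"
  using integrable_cmul[OF int_mono[of i], where c=c] by simp

lemma gp_sum: "gp p x = (\<Sum>i\<le>degree p. coeff p i * (x ^ i * w0 x))"
  unfolding gp_def poly_altdef by (simp add: sum_distrib_right mult.assoc)

lemma int_gp: "gp p integrable_on {0..}"
proof -
  have "(\<lambda>x. \<Sum>i\<le>degree p. coeff p i * (x ^ i * w0 x)) integrable_on {0..}"
    by (intro integrable_sum int_mono_c finite_atMost)
  then show ?thesis by (simp add: gp_sum[abs_def])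
qed

lemma int_gp_ivl: "a \<ge> 0 \<Longrightarrow> gp p integrable_on {a..b}"
  by (rule integrable_on_subinterval[OF int_gp]) auto

lemma w0_cont: "a > 0 \<Longrightarrow> continuous_on {a..b} w0"
  unfolding w0_def by (intro continuous_intros) auto

lemma gp_cont: "a > 0 \<Longrightarrow> continuous_on {a..b} (gp p)"
  unfolding gp_def using w0_cont by (intro continuous_intros) auto

lemma gp_add: "gp (p + q) = (\<lambda>x. gp p x + gp q x)"
  by (auto simp: gp_def fun_eq_iff algebra_simps)
lemma gp_diff: "gp (p - q) = (\<lambda>x. gp p x - gp q x)"
  by (auto simp: gp_def fun_eq_iff algebra_simps)
lemma gp_smult: "gp (smult c p) = (\<lambda>x. c * gp p x)"
  by (auto simp: gp_def fun_eq_iff algebra_simps)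
lemma gp_0: "gp 0 = (\<lambda>x. 0)"
  by (auto simp: gp_def fun_eq_iff)

lemma L_add: "L (p + q) = L p + L q"
  unfolding L_def gp_add by (rule integral_add[OF int_gp int_gp])
lemma L_diff: "L (p - q) = L p - L q"
  unfolding L_def gp_diff by (rule integral_diff[OF int_gp int_gp])
lemma L_smult: "L (smult c p) = c * L p"
  unfolding L_def gp_smult by simp
lemma L_0: "L 0 = 0"
  unfolding L_def gp_0 by simp

lemma R_add: "s \<ge> 0 \<Longrightarrow> R (p + q) s = R p s + R q s"
  unfolding R_def gp_add by (rule integral_add[OF int_gp_ivl int_gp_ivl]) auto
lemma R_diff: "s \<ge> 0 \<Longrightarrow> R (p - q) s = R p s - R q s"
  unfolding R_def gp_diff by (rule integral_diff[OF int_gp_ivl int_gp_ivl]) auto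
lemma R_smult: "R (smult c p) s = c * R p s"
  unfolding R_def gp_smult by simp
lemma R_0: "R 0 s = 0"
  unfolding R_def gp_0 by simp

lemma M_add: "s \<ge> 0 \<Longrightarrow> M s (p + q) = M s p + M s q"
  unfolding M_def by (simp add: L_add R_add algebra_simps)
lemma M_diff: "s \<ge> 0 \<Longrightarrow> M s (p - q) = M s p - M s q"
  unfolding M_def by (simp add: L_diff R_diff algebra_simps)
lemma M_smult: "M s (smult c p) = c * M s p"
  unfolding M_def by (simp add: L_smult R_smult algebra_simps)
lemma M_0: "M s 0 = 0"
  unfolding M_def by (simp add: L_0 R_0)
lemma M_sum: "s \<ge> 0 \<Longrightarrow> M s (\<Sum>k\<in>K. f k) = (\<Sum>k\<in>K. M s (f k))"
  by (induction K rule: infinite_finite_induct) (simp_all add: M_0 M_add)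

lemma R_split: "0 \<le> s \<Longrightarrow> s \<le> T \<Longrightarrow> R p T - R p s = integral {s..T} (gp p)"
  unfolding R_def using Henstock_Kurzweil_Integration.integral_combine[where a=0 and c=s and b=T and f="gp p"] int_gp_ivl[where a=0 and p=p and b=T] by simp

lemma restr: "s \<ge> 0 \<Longrightarrow> (\<lambda>x. if x \<in> {0..s} then gp p x else 0) integrable_on {0..} \<and>
    integral {0..} (\<lambda>x. if x \<in> {0..s} then gp p x else 0) = R p s"
proof -
  assume s: "s \<ge> 0"
  have e: "{0..s} \<inter> {0..} = {0..s::real}" by auto
  show ?thesis
    unfolding integrable_restrict_Int integral_restrict_Int e R_def
    using int_gp_ivl by simp
qed

lemma wgt_eq: "x \<ge> 0 \<Longrightarrow> poly f x * poly g x * wgt \<alpha> A B s x =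
    (A + B) * gp (f * g) x - B * (if x \<in> {0..s} then gp (f * g) x else 0)"
  by (auto simp: wgt_def heaviside_def gp_def w0_def algebra_simps)

lemma K_int: "s \<ge> 0 \<Longrightarrow> (\<lambda>x. poly f x * poly g x * wgt \<alpha> A B s x) integrable_on {0..}"
proof -
  assume s: "s \<ge> 0"
  have "(\<lambda>x. (A + B) * gp (f * g) x - B * (if x \<in> {0..s} then gp (f * g) x else 0)) integrable_on {0..}"
    by (intro integrable_diff) (use integrable_cmul[OF int_gp] integrable_cmul[OF conjunct1[OF restr[OF s]]] in simp_all)
  then show ?thesis by (rule integrable_eq) (simp add: wgt_eq)
qed

lemma K_M: "s \<ge> 0 \<Longrightarrow> integral {0..} (\<lambda>x. poly f x * poly g x * wgt \<alpha> A B s x) = M s (f * g)"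
proof -
  assume s: "s \<ge> 0"
  have "integral {0..} (\<lambda>x. poly f x * poly g x * wgt \<alpha> A B s x) =
     integral {0..} (\<lambda>x. (A + B) * gp (f * g) x - B * (if x \<in> {0..s} then gp (f * g) x else 0))"
    by (rule integral_cong) (simp add: wgt_eq)
  also have "\<dots> = integral {0..} (\<lambda>x. (A + B) * gp (f * g) x) - integral {0..} (\<lambda>x. B * (if x \<in> {0..s} then gp (f * g) x else 0))"
    by (rule integral_diff) (use integrable_cmul[OF int_gp] integrable_cmul[OF conjunct1[OF restr[OF s]]] in simp_all)
  also have "\<dots> = M s (f * g)"
    using restr[OF s] by (simp add: M_def L_def)
  finally show ?thesis .
qed

lemma hnorm_M: "s \<ge> 0 \<Longrightarrow> hnorm \<alpha> A B s q = M s (q * q)"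
  unfolding hnorm_def by (simp add: power2_eq_square K_M[symmetric])

lemma wgt_nonneg: "x \<ge> 0 \<Longrightarrow> wgt \<alpha> A B s x \<ge> 0"
  unfolding wgt_def heaviside_def using Anonneg Bpos by (auto intro!: mult_nonneg_nonneg)

lemma M_sq_nonneg: "s \<ge> 0 \<Longrightarrow> M s (q * q) \<ge> 0"
proof -
  assume s: "s \<ge> 0"
  have "0 \<le> integral {0..} (\<lambda>x. poly q x * poly q x * wgt \<alpha> A B s x)"
    by (rule integral_nonneg[OF K_int[OF s]]) (simp add: wgt_nonneg)
  then show ?thesis using K_M[OF s] by simp
qed

lemma M_sq_pos:
  assumes s: "s \<ge> 0" and q: "q \<noteq> 0"
  shows "M s (q * q) > 0"
proof -
  have fin: "finite {x. poly q x = 0}" by (rule poly_roots_finite[OF q])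
  obtain b0 where b0: "\<And>x. x \<in> {x. poly q x = 0} \<Longrightarrow> norm x \<le> b0"
    using finite_imp_bounded[OF fin] unfolding bounded_iff by blast
  define c where "c = max b0 s + 1"
  have cpos: "c > 0" using s by (simp add: c_def)
  have noroot: "poly q x \<noteq> 0" if "x \<ge> c" for x
  proof
    assume "poly q x = 0"
    then have "norm x \<le> b0" using b0 by blast
    then show False using that by (simp add: c_def)
  qed
  define G where "G x = poly q x * poly q x * w0 x * B" for x
  have Gc: "continuous_on {c..c+1} G"
    unfolding G_def using w0_cont[OF cpos] by (intro continuous_intros) auto
  obtain x0 where x0: "x0 \<in> {c..c+1}" "\<And>y. y \<in> {c..c+1} \<Longrightarrow> G x0 \<le> G y"
    using continuous_attains_inf[OF compact_Icc _ Gc] by auto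
  have G0: "G x0 > 0"
  proof -
    have "x0 \<ge> c" using x0 by simp
    then have "poly q x0 \<noteq> 0" "x0 > 0" using noroot cpos by auto
    moreover have "0 < poly q x0 * poly q x0"
      using \<open>poly q x0 \<noteq> 0\<close> by (cases "poly q x0 > 0") (auto simp: mult_neg_neg)
    moreover have "0 < x0 powr \<alpha> * exp (- x0)" using \<open>x0 > 0\<close> by simp
    ultimately show ?thesis unfolding G_def w0_def using Bpos by (metis mult_pos_pos)
  qed
  define F where "F x = poly q x * poly q x * wgt \<alpha> A B s x" for x
  have Fint: "F integrable_on {0..}" unfolding F_def by (rule K_int[OF s])
  have Fint2: "F integrable_on {c..c+1}" by (rule integrable_on_subinterval[OF Fint]) (use cpos in auto)
  have FG: "G y \<le> F y" if "y \<in> {c..c+1}" for y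
  proof -
    have "y > s" "y > 0" using that s by (auto simp: c_def)
    then have "F y = poly q y * poly q y * w0 y * (A + B)"
      by (simp add: F_def wgt_def heaviside_def w0_def)
    moreover have "poly q y * poly q y * w0 y \<ge> 0" by (simp add: w0_def)
    ultimately show ?thesis unfolding G_def using Anonneg
      by (simp add: mult_left_mono)
  qed
  have "G x0 = integral {c..c+1} (\<lambda>x. G x0)" by simp
  also have "\<dots> \<le> integral {c..c+1} F"
    by (rule integral_le) (use Fint2 order_trans[OF x0(2) FG] in auto)
  also have "\<dots> \<le> integral {0..} F"
    by (rule integral_subset_le) (use Fint Fint2 cpos in \<open>auto simp: F_def intro!: mult_nonneg_nonneg[OF zero_le_square] wgt_nonneg\<close>)
  also have "\<dots> = M s (q * q)" unfolding F_def by (rule K_M[OF s])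
  finally show ?thesis using G0 by simp
qed

lemma degP: "s > 0 \<Longrightarrow> degree (P k s) = k"
  using OPS unfolding monic_OPS_def by blast
lemma leadP: "s > 0 \<Longrightarrow> lead_coeff (P k s) = 1"
  using OPS unfolding monic_OPS_def by blast
lemma coeffP: "s > 0 \<Longrightarrow> coeff (P k s) k = 1"
  using degP leadP by metis
lemma Pnz: "s > 0 \<Longrightarrow> P k s \<noteq> 0"
proof
  assume s: "s > 0" and "P k s = 0"
  then show False using coeffP[OF s, where k=k] by simp
qed

lemma orth: "s > 0 \<Longrightarrow> j \<noteq> k \<Longrightarrow> M s (P k s * P j s) = 0"
proof -
  assume s: "s > 0" and jk: "j \<noteq> k"
  have "integral {0..} (\<lambda>x. poly (P k s) x * poly (P j s) x * wgt \<alpha> A B s x) = 0"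
    using OPS[OF s] jk unfolding monic_OPS_def by blast
  then show ?thesis using K_M[of s] s by simp
qed

lemma orth_low:
  assumes s: "s > 0" and q: "\<forall>i\<ge>m. coeff q i = 0"
  shows "M s (P m s * q) = 0"
proof -
  obtain a where a: "q = (\<Sum>k<m. smult (a k) (P k s))"
    using expand[of "\<lambda>k. P k s" m q] degP[OF s] leadP[OF s] q by blast
  have "P m s * q = (\<Sum>k<m. smult (a k) (P m s * P k s))"
    unfolding a by (simp add: sum_distrib_left mult_smult_right)
  then have "M s (P m s * q) = (\<Sum>k<m. a k * M s (P m s * P k s))"
    using s by (simp add: M_sum M_smult)
  also have "\<dots> = 0" using orth[OF s] by (intro sum.neutral) auto
  finally show ?thesis .
qed

end

context opsl begin
lemma orth': "s > 0 \<Longrightarrow> k \<noteq> j \<Longrightarrow> M s (P k s * P j s) = 0"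
  using orth by metis

lemma gp_sq_nonneg: "z \<ge> 0 \<Longrightarrow> gp (q * q) z \<ge> 0"
proof -
  assume z: "z \<ge> 0"
  have "0 \<le> poly q z * poly q z" by simp
  moreover have "0 \<le> w0 z" by (simp add: w0_def)
  ultimately show ?thesis by (simp add: gp_def)
qed

lemma M_shift: "M s p = M t p + B * (R p t - R p s)"
  by (simp add: M_def algebra_simps)

lemma CS:
  assumes s: "s \<ge> 0" and v: "M s (v * v) > 0"
  shows "(M s (u * v))^2 \<le> M s (u * u) * M s (v * v)"
proof -
  define a where "a = M s (v * v)"
  define b where "b = M s (u * v)"
  define w where "w = smult a u - smult b v"
  have ww: "w * w = smult (a * a) (u * u) - smult (2 * a * b) (u * v) + smult (b * b) (v * v)"
    by (rule poly_eq_poly_eq_iff[THEN iffD1]) (simp add: fun_eq_iff w_def algebra_simps)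
  have "M s (w * w) = a * a * M s (u * u) - 2 * a * b * b + b * b * a"
    unfolding ww using s by (simp add: M_add M_diff M_smult a_def[symmetric] b_def[symmetric])
  moreover have "0 \<le> M s (w * w)" by (rule M_sq_nonneg[OF s])
  ultimately have "0 \<le> a * (a * M s (u * u) - b * b)" by (simp add: algebra_simps)
  moreover have "a > 0" using v by (simp add: a_def)
  ultimately have "b * b \<le> a * M s (u * u)" by (auto simp: zero_le_mult_iff)
  then show ?thesis by (simp add: power2_eq_square a_def b_def mult.commute)
qed

lemma sup_bound:
  assumes T: "T > 0"
  shows "\<exists>C\<ge>0. \<forall>u. (\<forall>i\<ge>n. coeff u i = 0) \<longrightarrow> (\<forall>x\<in>{a..b}. \<bar>poly u x\<bar> \<le> C * sqrt (M T (u * u)))"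
proof -
  define h where "h k = M T (P k T * P k T)" for k
  have hpos: "h k > 0" for k
    unfolding h_def by (rule M_sq_pos) (use T Pnz[OF T] in auto)
  have "\<exists>C>0. \<forall>x\<in>{a..b}. \<bar>poly (P k T) x\<bar> \<le> C" for k
    by (rule cont_bound) (intro continuous_intros)
  then have "\<forall>k. \<exists>C. \<forall>x\<in>{a..b}. \<bar>poly (P k T) x\<bar> \<le> C" by blast
  then obtain bd where bd: "\<And>k x. x \<in> {a..b} \<Longrightarrow> \<bar>poly (P k T) x\<bar> \<le> bd k" by metis
  define C where "C = (\<Sum>k<n. \<bar>bd k\<bar> / sqrt (h k))"
  have C0: "C \<ge> 0" unfolding C_def
    by (intro sum_nonneg divide_nonneg_nonneg abs_ge_zero real_sqrt_ge_zero less_imp_le[OF hpos])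
  show ?thesis
  proof (intro exI[of _ C] conjI allI impI ballI C0)
    fix u :: "real poly" and x :: real
    assume u: "\<forall>i\<ge>n. coeff u i = 0" and x: "x \<in> {a..b}"
    define N where "N = M T (u * u)"
    have N0: "N \<ge> 0" unfolding N_def by (rule M_sq_nonneg) (use T in simp)
    have sqN: "0 \<le> sqrt N / sqrt (h k)" for k using N0 hpos[of k] by simp
    obtain c where c: "u = (\<Sum>k<n. smult (c k) (P k T))"
      using expand[of "\<lambda>k. P k T" n u] degP[OF T] leadP[OF T] u by blast
    have cj: "M T (u * P j T) = c j * h j" if j: "j < n" for j
    proof -
      have "u * P j T = (\<Sum>k<n. smult (c k) (P k T * P j T))"
        unfolding c by (simp add: sum_distrib_right mult_smult_left)
      then have "M T (u * P j T) = (\<Sum>k<n. c k * M T (P k T * P j T))"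
        using T by (simp add: M_sum M_smult)
      also have "\<dots> = (\<Sum>k<n. if k = j then c j * h j else 0)"
        by (rule sum.cong) (auto simp: h_def orth'[OF T])
      also have "\<dots> = c j * h j" using j by simp
      finally show ?thesis .
    qed
    have cb: "\<bar>c j\<bar> \<le> sqrt N / sqrt (h j)" if j: "j < n" for j
    proof -
      have "(M T (u * P j T))^2 \<le> N * h j"
        using CS[where s=T and u=u and v="P j T"] T hpos[of j] by (simp add: N_def h_def)
      then have "(c j)^2 * h j * h j \<le> N * h j"
        using cj[OF j] by (simp add: power2_eq_square algebra_simps)
      then have "(c j)^2 * h j \<le> N" using hpos[of j] by (simp add: mult_le_cancel_right)
      then have "(c j)^2 \<le> N / h j" using hpos[of j] by (simp add: le_divide_eq)
      then have "sqrt ((c j)^2) \<le> sqrt (N / h j)" by (rule real_sqrt_le_mono)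
      then show ?thesis by (simp add: real_sqrt_divide)
    qed
    have "poly u x = (\<Sum>k<n. c k * poly (P k T) x)" unfolding c by (simp add: poly_sum)
    then have "\<bar>poly u x\<bar> \<le> (\<Sum>k<n. \<bar>c k\<bar> * \<bar>poly (P k T) x\<bar>)"
      using sum_abs[of "\<lambda>k. c k * poly (P k T) x" "{..<n}"] by (simp add: abs_mult)
    also have "\<dots> \<le> (\<Sum>k<n. (sqrt N / sqrt (h k)) * \<bar>bd k\<bar>)"
      by (intro sum_mono mult_mono) (use cb sqN order_trans[OF bd[OF x] abs_ge_self] in auto)
    also have "\<dots> = C * sqrt N"
      unfolding C_def sum_distrib_right by (rule sum.cong) (simp_all add: divide_inverse mult_ac)
    finally show "\<bar>poly u x\<bar> \<le> C * sqrt (M T (u * u))" unfolding N_def .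
  qed
qed

end

context opsl begin
lemma Pdiff_coeff:
  assumes s: "s > 0" and t: "t > 0"
  shows "\<forall>i\<ge>n. coeff (P n s - P n t) i = 0"
proof (intro allI impI)
  fix i assume i: "n \<le> i"
  show "coeff (P n s - P n t) i = 0"
  proof (cases "i = n")
    case True then show ?thesis using coeffP[OF s] coeffP[OF t] by simp
  next
    case False then have "n < i" using i by simp
    then show ?thesis using degP[OF s] degP[OF t] by (simp add: coeff_eq_0)
  qed
qed

lemma diff_a:
  assumes s: "s > 0" and t: "t > 0" and q: "\<forall>i\<ge>n. coeff q i = 0"
  shows "M s ((P n s - P n t) * q) = B * (R (P n t * q) s - R (P n t * q) t)"
proof -
  have a1: "M s (P n s * q) = 0" by (rule orth_low[OF s q])
  have a2: "M t (P n t * q) = 0" by (rule orth_low[OF t q])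
  have a3: "M s (P n t * q) = M t (P n t * q) + B * (R (P n t * q) t - R (P n t * q) s)"
    by (rule M_shift)
  have "M s ((P n s - P n t) * q) = M s (P n s * q) - M s (P n t * q)"
    using s by (simp add: left_diff_distrib M_diff)
  then show ?thesis using a1 a2 a3 by (simp add: algebra_simps)
qed

lemma main_id:
  assumes s: "s > 0" and t: "t > 0" and n: "n \<ge> 1"
  shows "(coeff (P n s) (n-1) - coeff (P n t) (n-1)) * M t (P (n-1) t * P (n-1) t)
     = B * (R (P n t * P (n-1) t) s - R (P n t * P (n-1) t) t)
       + B * (R ((P n s - P n t) * P (n-1) t) s - R ((P n s - P n t) * P (n-1) t) t)"
proof -
  define Q where "Q = P (n-1) t"
  define u where "u = P n s - P n t"
  define c where "c = coeff u (n-1)"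
  have cu: "c = coeff (P n s) (n-1) - coeff (P n t) (n-1)" by (simp add: c_def u_def)
  define v where "v = u - smult c Q"
  have uz: "\<forall>i\<ge>n. coeff u i = 0" unfolding u_def by (rule Pdiff_coeff[OF s t])
  have cQ: "coeff Q (n-1) = 1" unfolding Q_def by (rule coeffP[OF t])
  have dQ: "degree Q = n-1" unfolding Q_def by (rule degP[OF t])
  have qz: "\<forall>i\<ge>n. coeff Q i = 0"
  proof (intro allI impI)
    fix i assume "n \<le> i"
    then have "degree Q < i" using dQ n by simp
    then show "coeff Q i = 0" by (rule coeff_eq_0)
  qed
  have vz: "\<forall>i\<ge>n-1. coeff v i = 0"
  proof (intro allI impI)
    fix i assume i: "n - 1 \<le> i"
    show "coeff v i = 0"
    proof (cases "i = n-1")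
      case True then show ?thesis using cQ by (simp add: v_def c_def)
    next
      case False then have "n \<le> i" using i n by auto
      then show ?thesis using uz qz by (simp add: v_def)
    qed
  qed
  have Qv: "M t (Q * v) = 0" using orth_low[OF t vz] by (simp add: Q_def)
  have e1: "u * Q = Q * v + smult c (Q * Q)"
    by (rule poly_eq_poly_eq_iff[THEN iffD1]) (simp add: fun_eq_iff v_def algebra_simps)
  have e2: "M t (u * Q) = c * M t (Q * Q)" using t by (simp add: e1 M_add M_smult Qv)
  have e3: "M t ((P n t - P n s) * Q) = B * (R (P n s * Q) t - R (P n s * Q) s)"
    by (rule diff_a[OF t s qz])
  have e4: "M t ((P n t - P n s) * Q) = - M t (u * Q)" using t by (simp add: u_def left_diff_distrib M_diff)
  have e5: "P n s * Q = P n t * Q + u * Q" by (simp add: u_def algebra_simps)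
  have R5: "R (P n s * Q) x = R (P n t * Q) x + R (u * Q) x" if "x \<ge> 0" for x
    using that by (simp add: e5 R_add)
  have "c * M t (Q * Q) = - (B * (R (P n s * Q) t - R (P n s * Q) s))" using e2 e3 e4 by simp
  also have "\<dots> = B * (R (P n t * Q) s - R (P n t * Q) t) + B * (R (u * Q) s - R (u * Q) t)"
    using R5[OF less_imp_le[OF s]] R5[OF less_imp_le[OF t]] by (simp add: algebra_simps)
  finally show ?thesis by (simp add: cu Q_def u_def)
qed

lemma R_lip:
  assumes a: "a > 0" and x: "x \<in> {a..b}" and y: "y \<in> {a..b}"
    and bnd: "\<And>z. z \<in> {a..b} \<Longrightarrow> \<bar>gp p z\<bar> \<le> K"
  shows "\<bar>R p x - R p y\<bar> \<le> K * \<bar>x - y\<bar>"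
proof -
  have gen: "\<bar>R p x' - R p y'\<bar> \<le> K * \<bar>x' - y'\<bar>" if xy: "x' \<in> {a..b}" "y' \<in> {a..b}" "y' \<le> x'" for x' y'
  proof -
    have "R p x' - R p y' = integral {y'..x'} (gp p)"
      by (rule R_split[where s=y' and T=x' and p=p]) (use xy a in auto)
    moreover have "norm (integral {y'..x'} (gp p)) \<le> K * (x' - y')"
    proof (rule integral_bound)
      show "y' \<le> x'" by (rule xy(3))
      show "continuous_on {y'..x'} (gp p)" by (rule gp_cont) (use xy a in auto)
      fix z assume "z \<in> {y'..x'}"
      then have "z \<in> {a..b}" using xy by auto
      then show "norm (gp p z) \<le> K" using bnd by simp
    qed
    ultimately show ?thesis using xy(3) by simp
  qed
  show ?thesis
  proof (cases "y \<le> x")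
    case True then show ?thesis using gen[OF x y] by simp
  next
    case False then show ?thesis using gen[OF y x] by (simp add: abs_minus_commute)
  qed
qed

lemma lip_u:
  assumes t: "t > 0"
  shows "\<exists>K\<ge>0. \<forall>s\<in>{t/2..2*t}. \<forall>x\<in>{t/2..2*t}. \<bar>poly (P n s - P n t) x\<bar> \<le> K * \<bar>s - t\<bar>"
proof -
  define T where "T = 2 * t"
  have T: "T > 0" using t by (simp add: T_def)
  obtain Cb where Cb: "Cb \<ge> 0" "\<And>u x. \<forall>i\<ge>n. coeff u i = 0 \<Longrightarrow> x \<in> {t/2..2*t} \<Longrightarrow> \<bar>poly u x\<bar> \<le> Cb * sqrt (M T (u * u))"
    using sup_bound[OF T, where n=n and a="t/2" and b="2*t"] by blast
  have ct: "continuous_on {t/2..2*t} (\<lambda>x. poly (P n t) x * w0 x)"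
    by (intro continuous_intros w0_cont) (use t in auto)
  obtain E where E: "E > 0" "\<And>x. x \<in> {t/2..2*t} \<Longrightarrow> \<bar>poly (P n t) x * w0 x\<bar> \<le> E"
    using cont_bound[OF ct] by blast
  define K where "K = Cb * Cb * B * E"
  show ?thesis
  proof (intro exI[of _ K] conjI ballI)
    show "K \<ge> 0" using Cb E Bpos by (simp add: K_def)
    fix s x assume s: "s \<in> {t/2..2*t}" and x: "x \<in> {t/2..2*t}"
    have spos: "s > 0" using s t by auto
    define u where "u = P n s - P n t"
    have uz: "\<forall>i\<ge>n. coeff u i = 0" unfolding u_def by (rule Pdiff_coeff[OF spos t])
    define N where "N = M T (u * u)"
    have N0: "N \<ge> 0" unfolding N_def by (rule M_sq_nonneg) (use T in simp)
    have ub: "\<bar>poly u z\<bar> \<le> Cb * sqrt N" if "z \<in> {t/2..2*t}" for z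
      using Cb(2)[OF uz that] by (simp add: N_def)
    have "N \<le> M s (u * u)"
    proof -
      have m1: "M s (u * u) = M T (u * u) + B * (R (u * u) T - R (u * u) s)" by (rule M_shift)
      have m2: "R (u * u) T - R (u * u) s = integral {s..T} (gp (u * u))"
        by (rule R_split) (use s spos in \<open>auto simp: T_def\<close>)
      have m3: "integral {s..T} (gp (u * u)) \<ge> 0"
        by (rule integral_nonneg[OF int_gp_ivl]) (use spos in \<open>auto intro: gp_sq_nonneg\<close>)
      have "0 \<le> B * integral {s..T} (gp (u * u))" using m3 Bpos by simp
      then show ?thesis using m1 m2 by (simp add: N_def)
    qed
    also have "M s (u * u) = B * (R (P n t * u) s - R (P n t * u) t)"
      unfolding u_def by (rule diff_a[OF spos t]) (use uz in \<open>simp add: u_def\<close>)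
    also have "\<dots> \<le> B * ((E * (Cb * sqrt N)) * \<bar>s - t\<bar>)"
    proof -
      have "\<bar>R (P n t * u) s - R (P n t * u) t\<bar> \<le> (E * (Cb * sqrt N)) * \<bar>s - t\<bar>"
      proof (rule R_lip[where a="t/2" and b="2*t"])
        show "t/2 > 0" using t by simp
        show "s \<in> {t/2..2*t}" by (rule s)
        show "t \<in> {t/2..2*t}" using t by simp
        fix z assume z: "z \<in> {t/2..2*t}"
        have "\<bar>gp (P n t * u) z\<bar> = \<bar>poly (P n t) z * w0 z\<bar> * \<bar>poly u z\<bar>"
          by (simp add: gp_def abs_mult mult_ac)
        also have "\<dots> \<le> E * (Cb * sqrt N)"
          by (rule mult_mono) (use E(2)[OF z] ub[OF z] E(1) in auto)
        finally show "\<bar>gp (P n t * u) z\<bar> \<le> E * (Cb * sqrt N)" .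
      qed
      from mult_left_mono[OF abs_le_D1[OF this] less_imp_le[OF Bpos]] show ?thesis .
    qed
    finally have Nle: "N \<le> B * ((E * (Cb * sqrt N)) * \<bar>s - t\<bar>)" .
    have sN: "sqrt N \<le> B * E * Cb * \<bar>s - t\<bar>"
    proof (cases "N = 0")
      case True
      have "0 \<le> B * E * Cb * \<bar>s - t\<bar>" using Bpos E Cb by (intro mult_nonneg_nonneg) auto
      with True show ?thesis by simp
    next
      case False
      then have sp: "sqrt N > 0" using N0 by simp
      have "sqrt N * sqrt N \<le> (B * E * Cb * \<bar>s - t\<bar>) * sqrt N"
        using Nle N0 by (simp add: mult_ac)
      from mult_right_le_imp_le[OF this sp] show ?thesis .
    qed
    have "\<bar>poly u x\<bar> \<le> Cb * sqrt N" by (rule ub[OF x])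
    also have "\<dots> \<le> Cb * (B * E * Cb * \<bar>s - t\<bar>)" by (rule mult_left_mono[OF sN Cb(1)])
    also have "\<dots> = K * \<bar>s - t\<bar>" by (simp add: K_def mult_ac)
    finally show "\<bar>poly (P n s - P n t) x\<bar> \<le> K * \<bar>s - t\<bar>" by (simp add: u_def)
  qed
qed

end

context opsl begin
lemma main:
  assumes t: "t > 0" and n: "n \<ge> 1"
  shows "((\<lambda>s. coeff (P n s) (n - 1)) has_real_derivative
           B * t powr \<alpha> * exp (- t) * poly (P n t) t * poly (P (n - 1) t) t
             / hnorm \<alpha> A B t (P (n - 1) t)) (at t)"
proof -
  define Q where "Q = P (n-1) t"
  define F where "F = P n t * Q"
  define h where "h = M t (Q * Q)"
  have hpos: "h > 0" unfolding h_def Q_def by (rule M_sq_pos) (use t Pnz[OF t] in auto)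
  define a where "a = t/2"
  define b where "b = 2*t"
  have a0: "a > 0" "a < t" "t < b" using t by (auto simp: a_def b_def)
  obtain K where K: "K \<ge> 0" "\<And>s x. s \<in> {a..b} \<Longrightarrow> x \<in> {a..b} \<Longrightarrow> \<bar>poly (P n s - P n t) x\<bar> \<le> K * \<bar>s - t\<bar>"
    using lip_u[OF t, where n=n] unfolding a_def b_def by blast
  have cQ: "continuous_on {a..b} (\<lambda>x. poly Q x * w0 x)"
    by (intro continuous_intros w0_cont a0(1))
  obtain G where G: "G > 0" "\<And>x. x \<in> {a..b} \<Longrightarrow> \<bar>poly Q x * w0 x\<bar> \<le> G"
    using cont_bound[OF cQ] by blast
  define E where "E s = R ((P n s - P n t) * Q) s - R ((P n s - P n t) * Q) t" for s
  have Eb: "\<bar>E s\<bar> \<le> (K * G) * (\<bar>s - t\<bar> * \<bar>s - t\<bar>)" if s: "s \<in> {a..b}" for s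
  proof -
    have "\<bar>E s\<bar> \<le> (K * \<bar>s - t\<bar> * G) * \<bar>s - t\<bar>" unfolding E_def
    proof (rule R_lip[where a=a and b=b])
      show "a > 0" using a0 by simp
      show "s \<in> {a..b}" by (rule s)
      show "t \<in> {a..b}" using a0 by simp
      fix z assume z: "z \<in> {a..b}"
      have "\<bar>gp ((P n s - P n t) * Q) z\<bar> = \<bar>poly (P n s - P n t) z\<bar> * \<bar>poly Q z * w0 z\<bar>"
        by (simp add: gp_def abs_mult mult_ac)
      also have "\<dots> \<le> (K * \<bar>s - t\<bar>) * G"
        by (rule mult_mono) (use K(2)[OF s z] G(2)[OF z] K(1) in auto)
      finally show "\<bar>gp ((P n s - P n t) * Q) z\<bar> \<le> K * \<bar>s - t\<bar> * G" .
    qed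
    then show ?thesis by (simp add: mult_ac)
  qed
  have eqn: "coeff (P n s) (n-1) = coeff (P n t) (n-1) + (B / h) * ((R F s - R F t) + E s)"
    if s: "s \<in> {a..b}" for s
  proof -
    have spos: "s > 0" using s a0 by auto
    have "(coeff (P n s) (n-1) - coeff (P n t) (n-1)) * h = B * ((R F s - R F t) + E s)"
      using main_id[OF spos t n] by (simp add: h_def F_def Q_def E_def algebra_simps)
    then show ?thesis using hpos by (simp add: field_simps)
  qed
  have evI: "eventually (\<lambda>s. s \<in> {a<..<b}) (nhds t)"
    by (rule eventually_nhds_in_open) (use a0 in auto)
  have dR: "((\<lambda>s. R F s) has_real_derivative gp F t) (at t)"
  proof -
    have ev: "\<forall>\<^sub>F s in nhds t. R F a + integral {a..s} (gp F) = R F s"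
      using evI
    proof (rule eventually_mono)
      fix s assume "s \<in> {a<..<b}"
      then have "R F s - R F a = integral {a..s} (gp F)"
        by (intro R_split) (use a0 in auto)
      then show "R F a + integral {a..s} (gp F) = R F s" by simp
    qed
    have "((\<lambda>s. integral {a..s} (gp F)) has_real_derivative gp F t) (at t within {a..b})"
      by (rule integral_has_real_derivative) (use gp_cont[OF a0(1)] a0 in auto)
    then have "((\<lambda>s. integral {a..s} (gp F)) has_real_derivative gp F t) (at t)"
      using at_within_interior[of t "{a..b}"] a0 by simp
    then have "((\<lambda>s. R F a + integral {a..s} (gp F)) has_real_derivative 0 + gp F t) (at t)"
      by (rule DERIV_add[OF DERIV_const])
    then have D2: "((\<lambda>s. R F a + integral {a..s} (gp F)) has_real_derivative gp F t) (at t)"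
      by simp
    show ?thesis using DERIV_cong_ev[OF refl ev refl] D2 by blast
  qed
  have dE: "(E has_real_derivative 0) (at t)"
  proof -
    have E0: "E t = 0" by (simp add: E_def)
    have "((\<lambda>y. (E y - E t) / (y - t)) \<longlongrightarrow> 0) (at t)"
    proof (rule Lim_null_comparison)
      have "eventually (\<lambda>y. y \<noteq> t \<longrightarrow> y \<in> {a<..<b}) (nhds t)"
        using evI by (rule eventually_mono) simp
      then have "eventually (\<lambda>y. y \<in> {a<..<b}) (at t)"
        by (simp add: eventually_at_filter)
      then show "\<forall>\<^sub>F y in at t. norm ((E y - E t) / (y - t)) \<le> K * G * \<bar>y - t\<bar>"
      proof (rule eventually_mono)
        fix y assume y: "y \<in> {a<..<b}"
        show "norm ((E y - E t) / (y - t)) \<le> K * G * \<bar>y - t\<bar>"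
        proof (cases "y = t")
          case True then show ?thesis by simp
        next
          case False
          then have yp: "\<bar>y - t\<bar> > 0" by simp
          have "\<bar>E y\<bar> \<le> (K * G * \<bar>y - t\<bar>) * \<bar>y - t\<bar>" using Eb[of y] y by (simp add: mult_ac)
          then show ?thesis using yp E0 by (simp add: abs_divide divide_le_eq)
        qed
      qed
      show "((\<lambda>y. K * G * \<bar>y - t\<bar>) \<longlongrightarrow> 0) (at t)"
        by (auto intro!: tendsto_eq_intros)
    qed
    then show ?thesis using E0 by (simp add: has_field_derivative_iff)
  qed
  have dAll: "((\<lambda>s. coeff (P n t) (n-1) + (B / h) * ((R F s - R F t) + E s)) has_real_derivative
       0 + (B / h) * ((gp F t - 0) + 0)) (at t)"
    by (intro DERIV_add DERIV_cmult DERIV_diff DERIV_const dR dE)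
  have ev2: "\<forall>\<^sub>F s in nhds t. coeff (P n t) (n-1) + (B / h) * ((R F s - R F t) + E s) = coeff (P n s) (n-1)"
    using evI
  proof (rule eventually_mono)
    fix s assume "s \<in> {a<..<b}"
    then have "s \<in> {a..b}" by auto
    then show "coeff (P n t) (n-1) + (B / h) * ((R F s - R F t) + E s) = coeff (P n s) (n-1)"
      using eqn by metis
  qed
  have D: "((\<lambda>s. coeff (P n s) (n-1)) has_real_derivative 0 + (B / h) * ((gp F t - 0) + 0)) (at t)"
    using DERIV_cong_ev[OF refl ev2 refl] dAll by blast
  have "0 + (B / h) * ((gp F t - 0) + 0) = B * t powr \<alpha> * exp (- t) * poly (P n t) t * poly (P (n - 1) t) t
             / hnorm \<alpha> A B t (P (n - 1) t)"
    using hnorm_M[where s=t and q=Q] t by (simp add: h_def F_def Q_def gp_def w0_def divide_inverse mult_ac)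
  with D show ?thesis by simp
qed

end
theorem lemma9:
  fixes \<alpha> A B :: real and P :: "nat \<Rightarrow> real \<Rightarrow> real poly" and n :: nat and t :: real
  assumes "\<alpha> > 0" and "A \<ge> 0" and "B > 0" and "t > 0"
    and "\<And>s. s > 0 \<Longrightarrow> monic_OPS \<alpha> A B s (\<lambda>k. P k s)"
    and "n \<ge> 1"
  shows "((\<lambda>s. coeff (P n s) (n - 1)) has_real_derivative
           B * t powr \<alpha> * exp (- t) * poly (P n t) t * poly (P (n - 1) t) t
             / hnorm \<alpha> A B t (P (n - 1) t)) (at t)"
proof -
  have "opsl \<alpha> A B P" unfolding opsl_def using assms by blast
  from opsl.main[OF this assms(4) assms(6)] show ?thesis .
qed

end
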